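(* Let $G$ be a finite primitive unitary reflection group of rank at least 2 and let $P$ be a parabolic subgroup of $G$ of rank 1. Then $N_G(P)=C_G(P)$.
   Context: $V$ is a finite-dimensional complex vector space with a positive definite Hermitian form. A reflection is a finite-order linear map whose fixed space is a hyperplane; a unitary reflection group is a finite group of form-preserving linear maps of $V$ generated by reflections; its rank is $\dim V$. $G$ is primitive if there is no decomposition $V=V_1\oplus\cdots\oplus V_k$, $k>1$, into non-zero subspaces permuted by $G$. A parabolic subgroup is the pointwise stabiliser in $G$ of a subset of $V$; its rank is the codimension of its fixed point space. A rank 1 parabolic subgroup is cyclic, generated by a single reflection. *)

theory Defs
  imports "HOL-Analysis.Analysis"
begin

text \<open>V = complex^'n with the standard positive definite Hermitian form;
  linear maps of V are represented by matrices acting via *v.\<close>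

definition adjoint_mat :: "complex^'n^'n \<Rightarrow> complex^'n^'n" where
  "adjoint_mat A = (\<chi> i j. cnj (A $ j $ i))"

definition unitary_mat :: "complex^'n^'n \<Rightarrow> bool" where
  "unitary_mat A \<longleftrightarrow> A ** adjoint_mat A = mat 1 \<and> adjoint_mat A ** A = mat 1"

definition mat_power :: "complex^'n^'n \<Rightarrow> nat \<Rightarrow> complex^'n^'n" where
  "mat_power A k = ((\<lambda>B. A ** B) ^^ k) (mat 1)"

definition fixed_space :: "(complex^'n^'n) set \<Rightarrow> (complex^'n) set" where
  "fixed_space S = {v. \<forall>g\<in>S. g *v v = v}"

text \<open>A reflection: a finite-order linear map whose fixed space is a hyperplane.\<close>
definition is_reflection :: "complex^'n^'n \<Rightarrow> bool" where
  "is_reflection A \<longleftrightarrow> (\<exists>k>0. mat_power A k = mat 1)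
      \<and> vec.dim (fixed_space {A}) = CARD('n) - 1"

text \<open>Subgroup of GL(V) generated by a set of matrices.\<close>
inductive_set mat_gen :: "(complex^'n^'n) set \<Rightarrow> (complex^'n^'n) set" for S where
  one: "mat 1 \<in> mat_gen S"
| mul: "s \<in> S \<Longrightarrow> g \<in> mat_gen S \<Longrightarrow> s ** g \<in> mat_gen S"
| mulinv: "s \<in> S \<Longrightarrow> g \<in> mat_gen S \<Longrightarrow> matrix_inv s ** g \<in> mat_gen S"

text \<open>A finite group of unitary maps generated by reflections.\<close>
definition unitary_reflection_group :: "(complex^'n^'n) set \<Rightarrow> bool" where
  "unitary_reflection_group G \<longleftrightarrow> finite G \<and> (\<forall>g\<in>G. unitary_mat g)
     \<and> (\<exists>R. (\<forall>r\<in>R. is_reflection r) \<and> G = mat_gen R)"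

text \<open>Imprimitivity system: decomposition V = V_1 + ... + V_k, k > 1, into nonzero
  subspaces permuted by G.\<close>
definition imprimitivity_system :: "(complex^'n^'n) set \<Rightarrow> (complex^'n) set set \<Rightarrow> bool" where
  "imprimitivity_system G W \<longleftrightarrow> finite W \<and> card W > 1
     \<and> (\<forall>U\<in>W. vec.subspace U \<and> U \<noteq> {0})
     \<and> vec.span (\<Union>W) = UNIV
     \<and> (\<forall>U\<in>W. U \<inter> vec.span (\<Union>(W - {U})) = {0})
     \<and> (\<forall>g\<in>G. \<forall>U\<in>W. ((*v) g) ` U \<in> W)"

definition primitive :: "(complex^'n^'n) set \<Rightarrow> bool" where
  "primitive G \<longleftrightarrow> \<not> (\<exists>W. imprimitivity_system G W)"

definition pointwise_stabiliser :: "(complex^'n^'n) set \<Rightarrow> (complex^'n) set \<Rightarrow> (complex^'n^'n) set" where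
  "pointwise_stabiliser G X = {g\<in>G. \<forall>x\<in>X. g *v x = x}"

definition parabolic_subgroup :: "(complex^'n^'n) set \<Rightarrow> (complex^'n^'n) set \<Rightarrow> bool" where
  "parabolic_subgroup G P \<longleftrightarrow> (\<exists>X. P = pointwise_stabiliser G X)"

definition parabolic_rank :: "(complex^'n^'n) set \<Rightarrow> nat" where
  "parabolic_rank P = CARD('n) - vec.dim (fixed_space P)"

definition normaliser :: "(complex^'n^'n) set \<Rightarrow> (complex^'n^'n) set \<Rightarrow> (complex^'n^'n) set" where
  "normaliser G P = {g\<in>G. (\<lambda>h. g ** h ** matrix_inv g) ` P = P}"

definition centraliser :: "(complex^'n^'n) set \<Rightarrow> (complex^'n^'n) set \<Rightarrow> (complex^'n^'n) set" where
  "centraliser G P = {g\<in>G. \<forall>h\<in>P. g ** h = h ** g}"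

end

theory Submission
  imports Defs
begin

lemma fixed_sub: "vec.subspace (fixed_space S)"
  unfolding vec.subspace_def fixed_space_def
  by (auto simp: matrix_vector_right_distrib vector_scalar_commute matrix_vector_mult_0_right)

lemma lemA:
  fixes h :: "complex^'n^'n"
  assumes H: "vec.subspace H" and d: "vec.dim H = CARD('n) - 1" and f: "\<forall>v\<in>H. h *v v = v"
  shows "\<exists>c. \<forall>w. h *v w - c *s w \<in> H"
proof (cases "H = UNIV")
  case True then show ?thesis by auto
next
  case False
  then obtain u where u: "u \<notin> H" by auto
  have sH: "vec.span H = H" using H by (simp add: vec.span_eq_iff)
  have "vec.span H \<subset> vec.span (insert u H)"
    using u sH by (metis insertI1 subset_insertI vec.span_base vec.span_mono psubsetI)
  then have "vec.dim H < vec.dim (insert u H)"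
    by (metis vec.dim_psubset vec.dim_span)
  moreover have "vec.dim (insert u H) \<le> CARD('n)" by (rule dim_subset_UNIV_cart_gen)
  ultimately have "vec.dim (insert u H) = CARD('n)" using d by linarith
  then have sp: "vec.span (insert u H) = UNIV"
    by (metis vec.dim_eq_full vec.dim_span vec.span_UNIV vec_dim_card)
  have dec: "\<And>x. \<exists>k. x - k *s u \<in> H"
  proof -
    fix x
    have "x \<in> vec.span (insert u H)" using sp by auto
    then show "\<exists>k. x - k *s u \<in> H" using sH by (simp add: vec.span_insert)
  qed
  obtain c where c: "h *v u - c *s u \<in> H" using dec by blast
  show ?thesis
  proof (intro exI allI)
    fix w
    obtain k where k: "w - k *s u \<in> H" using dec by blast
    define b where "b = w - k *s u"
    have w: "w = b + k *s u" using b_def by simp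
    have hb: "h *v b = b" using f k b_def by simp
    have eq: "h *v w - c *s w = k *s (h *v u - c *s u) + (b - c *s b)"
      unfolding w by (simp add: matrix_vector_right_distrib vector_scalar_commute hb algebra_simps)
    have 1: "k *s (h *v u - c *s u) \<in> H" using c H vec.subspace_scale by blast
    have 2: "b - c *s b \<in> H" using k b_def H vec.subspace_diff vec.subspace_scale by blast
    show "h *v w - c *s w \<in> H" unfolding eq by (rule vec.subspace_add[OF H 1 2])
  qed
qed

lemma adj_mult: "adjoint_mat (A ** B) = adjoint_mat B ** (adjoint_mat A :: complex^'n^'n)"
  by (simp add: adjoint_mat_def matrix_matrix_mult_def vec_eq_iff mult.commute)

lemma adj_adj: "adjoint_mat (adjoint_mat A) = (A :: complex^'n^'n)"
  by (simp add: adjoint_mat_def vec_eq_iff)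

lemma adj_add: "adjoint_mat (A + B) = adjoint_mat A + (adjoint_mat B :: complex^'n^'n)"
  by (simp add: adjoint_mat_def vec_eq_iff)

lemma adj_one: "adjoint_mat (mat 1) = (mat 1 :: complex^'n^'n)"
  by (simp add: adjoint_mat_def vec_eq_iff mat_def)

lemma cms: "cnj z * (z::complex) = complex_of_real ((cmod z)^2)"
  by (simp only: complex_norm_square mult.commute)

lemma adj_zero: "adjoint_mat N ** N = 0 \<Longrightarrow> N = (0 :: complex^'n^'n)"
proof -
  assume a: "adjoint_mat N ** N = 0"
  show ?thesis unfolding vec_eq_iff
  proof (intro allI)
    fix i j
    have "(adjoint_mat N ** N) $ j $ j = (\<Sum>k\<in>UNIV. cnj (N$k$j) * N$k$j)"
      by (simp add: adjoint_mat_def matrix_matrix_mult_def)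
    also have "\<dots> = of_real (\<Sum>k\<in>UNIV. (cmod (N$k$j))^2)"
      unfolding of_real_sum by (intro sum.cong refl) (rule cms)
    finally have e: "(adjoint_mat N ** N) $ j $ j = of_real (\<Sum>k\<in>UNIV. (cmod (N$k$j))^2)" .
    have "(adjoint_mat N ** N) $ j $ j = 0" using a by simp
    then have "complex_of_real (\<Sum>k\<in>UNIV. (cmod (N$k$j))^2) = 0" using e by simp
    then have "(\<Sum>k\<in>UNIV. (cmod (N$k$j))^2) = 0" by (simp only: of_real_eq_0_iff)
    then have "(cmod (N$i$j))^2 = 0"
      by (subst (asm) sum_nonneg_eq_0_iff) auto
    then show "N $ i $ j = 0 $ i $ j" by simp
  qed
qed

lemma mat_rdistrib: "((A + B) ** C) = (A ** C) + (B ** (C::complex^'n^'n))"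
  by (simp add: matrix_matrix_mult_def vec_eq_iff distrib_right sum.distrib)

lemma mat_zero_mul: "(0::complex^'n^'n) ** C = 0"
  by (simp add: matrix_matrix_mult_def vec_eq_iff)

lemma nil_unitary:
  fixes N :: "complex^'n^'n"
  assumes nn: "N ** N = 0" and u: "adjoint_mat (N + mat 1) ** (N + mat 1) = mat 1"
  shows "N = 0"
proof -
  have e0: "adjoint_mat N ** N + (N + adjoint_mat N) = 0"
    using u by (simp add: adj_add adj_one matrix_add_ldistrib mat_rdistrib add.assoc)
  have e: "adjoint_mat N ** N + adjoint_mat N + N = 0"
    using e0 by (simp add: algebra_simps)
  have "(adjoint_mat N ** N + adjoint_mat N + N) ** N = adjoint_mat N ** N"
    by (simp add: mat_rdistrib nn matrix_mul_assoc[symmetric])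
  then have "adjoint_mat N ** N = 0" using e by simp
  then show ?thesis by (rule adj_zero)
qed


lemma unitary_inv:
  fixes g :: "complex^'n^'n"
  assumes "unitary_mat g"
  shows "g ** matrix_inv g = mat 1 \<and> matrix_inv g ** g = mat 1"
  unfolding matrix_inv_def
  by (rule someI[of _ "adjoint_mat g"]) (use assms in \<open>simp add: unitary_mat_def\<close>)

lemma adj_fix:
  fixes h :: "complex^'n^'n"
  assumes "unitary_mat h" "h *v x = x"
  shows "adjoint_mat h *v x = x"
proof -
  have "adjoint_mat h *v x = adjoint_mat h *v (h *v x)" using assms by simp
  also have "\<dots> = (adjoint_mat h ** h) *v x" by (rule matrix_vector_mul_assoc)
  also have "\<dots> = x" using assms(1) unfolding unitary_mat_def by simp
  finally show ?thesis .
qed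

theorem lemma5p1:
  fixes G P :: "(complex^'n^'n) set"
  assumes "unitary_reflection_group G"
    and "primitive G"
    and "CARD('n) \<ge> 2"
    and "parabolic_subgroup G P"
    and "parabolic_rank P = 1"
  shows "normaliser G P = centraliser G P"
proof -
  have unG: "\<And>g. g \<in> G \<Longrightarrow> unitary_mat g" using assms(1) unfolding unitary_reflection_group_def by blast
  have PG: "P \<subseteq> G" using assms(4) unfolding parabolic_subgroup_def pointwise_stabiliser_def by blast
  define H where "H = fixed_space P"
  have Hs: "vec.subspace H" unfolding H_def by (rule fixed_sub)
  have "vec.dim H \<le> CARD('n)" by (rule dim_subset_UNIV_cart_gen)
  then have dH: "vec.dim H = CARD('n) - 1" using assms(5) unfolding parabolic_rank_def H_def by simp
  have fixH: "\<And>h v. h \<in> P \<Longrightarrow> v \<in> H \<Longrightarrow> h *v v = v" unfolding H_def fixed_space_def by blast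
  have inH: "\<And>v. (\<And>h. h \<in> P \<Longrightarrow> h *v v = v) \<Longrightarrow> v \<in> H" unfolding H_def fixed_space_def by blast
  show ?thesis
  proof
    show "normaliser G P \<subseteq> centraliser G P"
    proof
      fix g assume gN: "g \<in> normaliser G P"
      then have gG: "g \<in> G" and im: "(\<lambda>h. g ** h ** matrix_inv g) ` P = P"
        unfolding normaliser_def by auto
      define gi where "gi = matrix_inv g"
      have ggi: "g ** gi = mat 1" "gi ** g = mat 1" using unitary_inv[OF unG[OF gG]] gi_def by auto
      have gH: "g *v v \<in> H" if v: "v \<in> H" for v
      proof (rule inH)
        fix h' assume "h' \<in> P"
        then obtain h'' where h'': "h'' \<in> P" "h' = g ** h'' ** gi" using im gi_def by force
        have "h' *v (g *v v) = g *v (h'' *v ((gi ** g) *v v))"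
          by (simp add: h''(2) matrix_vector_mul_assoc matrix_mul_assoc)
        also have "\<dots> = g *v v" using ggi fixH[OF h''(1) v] by simp
        finally show "h' *v (g *v v) = g *v v" .
      qed
      have comm: "g ** h = h ** g" if hP: "h \<in> P" for h
      proof -
        define h1 where "h1 = g ** h ** gi"
        have h1P: "h1 \<in> P" using im hP h1_def gi_def by blast
        have uh: "unitary_mat h" using unG PG hP by blast
        have uh1: "unitary_mat h1" using unG PG h1P by blast
        obtain c where c: "\<And>w. h *v w - c *s w \<in> H"
          using lemA[OF Hs dH, of h] fixH[OF hP] by blast
        have d1: "h1 *v v - c *s v \<in> H" for v
        proof -
          have "h1 *v v - c *s v = g *v (h *v (gi *v v) - c *s (gi *v v))"
            by (simp add: h1_def matrix_vector_mul_assoc[symmetric] matrix_vector_right_distrib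
                 vector_scalar_commute matrix_vector_mult_diff_distrib)
               (simp add: matrix_vector_mul_assoc ggi)
          then show ?thesis using gH[OF c] by simp
        qed
        have d: "h1 *v v - h *v v \<in> H" for v
        proof -
          have "h1 *v v - h *v v = (h1 *v v - c *s v) - (h *v v - c *s v)" by simp
          then show ?thesis using vec.subspace_diff[OF Hs d1 c] by metis
        qed
        define N where "N = adjoint_mat h ** h1 - mat 1"
        have Nv: "N *v v = adjoint_mat h *v (h1 *v v - h *v v)" for v
        proof -
          have aa: "adjoint_mat h ** h = mat 1" using uh unfolding unitary_mat_def by simp
          have "N *v v = (adjoint_mat h ** h1) *v v - mat 1 *v v"
            unfolding N_def by (rule matrix_vector_mult_diff_rdistrib)
          also have "\<dots> = adjoint_mat h *v (h1 *v v) - (adjoint_mat h ** h) *v v"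
            by (simp only: matrix_vector_mul_assoc aa)
          also have "\<dots> = adjoint_mat h *v (h1 *v v) - adjoint_mat h *v (h *v v)"
            by (simp only: matrix_vector_mul_assoc)
          also have "\<dots> = adjoint_mat h *v (h1 *v v - h *v v)"
            by (rule matrix_vector_mult_diff_distrib[symmetric])
          finally show ?thesis .
        qed
        have NH: "N *v v \<in> H" for v
        proof -
          have "adjoint_mat h *v (h1 *v v - h *v v) = h1 *v v - h *v v"
            using adj_fix[OF uh] fixH[OF hP d] by blast
          then show ?thesis using Nv d by simp
        qed
        have N0: "N *v v = 0" if "v \<in> H" for v
          using Nv[of v] fixH[OF hP that] fixH[OF h1P that] by simp
        have NN: "N ** N = 0"
          unfolding matrix_eq
          by (simp add: matrix_vector_mul_assoc[symmetric] N0[OF NH])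
        have NU: "adjoint_mat (N + mat 1) ** (N + mat 1) = mat 1"
        proof -
          have "N + mat 1 = adjoint_mat h ** h1" unfolding N_def by simp
          then have "adjoint_mat (N + mat 1) ** (N + mat 1) = adjoint_mat h1 ** ((h ** adjoint_mat h) ** h1)"
            by (simp add: adj_mult adj_adj matrix_mul_assoc)
          also have "\<dots> = mat 1" using uh uh1 by (simp add: unitary_mat_def)
          finally show ?thesis .
        qed
        have "N = 0" by (rule nil_unitary[OF NN NU])
        then have "adjoint_mat h ** h1 = mat 1" unfolding N_def by simp
        then have "h ** (adjoint_mat h ** h1) = h" by simp
        then have hh1: "h1 = h" using uh by (simp add: matrix_mul_assoc unitary_mat_def)
        have "h ** g = g ** h ** (gi ** g)" using hh1 by (simp add: h1_def matrix_mul_assoc)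
        then show ?thesis using ggi by simp
      qed
      show "g \<in> centraliser G P" unfolding centraliser_def using gG comm by blast
    qed
  next
    show "centraliser G P \<subseteq> normaliser G P"
    proof
      fix g assume "g \<in> centraliser G P"
      then have gG: "g \<in> G" and cm: "\<And>h. h \<in> P \<Longrightarrow> g ** h = h ** g"
        unfolding centraliser_def by auto
      have ggi: "g ** matrix_inv g = mat 1" using unitary_inv[OF unG[OF gG]] by auto
      have "\<And>h. h \<in> P \<Longrightarrow> g ** h ** matrix_inv g = h"
        using cm ggi by (simp add: matrix_mul_assoc[symmetric])
      then have "(\<lambda>h. g ** h ** matrix_inv g) ` P = P" by simp
      then show "g \<in> normaliser G P" unfolding normaliser_def using gG by blast
    qed
  qed
qed

end
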